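(* Let $\kappa$ be a regular cardinal with $\kappa>\aleph_0$, $\lambda$ a regular cardinal $>2^\kappa$, $S\subseteq\{\delta<\lambda:\mathrm{cf}(\delta)=\kappa\}$ stationary, and $I$ a normal ideal on $\lambda$ with $S\notin I$. If $I$ is $\lambda^+$-saturated, then there is a sequence $\langle C_\delta:\delta\in S\rangle$, each $C_\delta$ a club of $\delta$ of order type $\mathrm{cf}(\delta)$, such that for every club $C$ of $\lambda$ we have $\{\delta\in S:C_\delta\setminus C\text{ is unbounded in }\delta\}\in I$.
   Context: An ideal $I$ on $\lambda$ is $\lambda^+$-saturated if the Boolean algebra $\mathcal P(\lambda)/I$ has no family of $\lambda^+$ pairwise disjoint nonzero elements (i.e. there are no $\lambda^+$ subsets of $\lambda$ not in $I$ whose pairwise intersections are in $I$). *)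

theory Defs
  imports Main "HOL-Library.Countable_Set"
begin

text \<open>Ordinals below lambda are modelled by the elements of a wellorder type 'l,
  whose whole universe has order type lambda. Ordinals below lambda (such as kappa,
  or delta) are elements of 'l, identified with their set of predecessors.\<close>

definition unbounded_below :: "'l::wellorder \<Rightarrow> 'l set \<Rightarrow> bool" where
  "unbounded_below \<delta> X \<longleftrightarrow> X \<subseteq> {..<\<delta>} \<and> (\<forall>\<alpha><\<delta>. \<exists>\<beta>\<in>X. \<alpha> < \<beta>)"

definition accum_pt :: "'l::wellorder \<Rightarrow> 'l set \<Rightarrow> bool" where
  "accum_pt \<gamma> X \<longleftrightarrow> (\<exists>\<beta>\<in>X. \<beta> < \<gamma>) \<and> (\<forall>\<alpha><\<gamma>. \<exists>\<beta>\<in>X. \<alpha> < \<beta> \<and> \<beta> < \<gamma>)"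

definition club_below :: "'l::wellorder \<Rightarrow> 'l set \<Rightarrow> bool" where
  "club_below \<delta> C \<longleftrightarrow> unbounded_below \<delta> C \<and> (\<forall>\<gamma><\<delta>. accum_pt \<gamma> C \<longrightarrow> \<gamma> \<in> C)"

definition club :: "'l::wellorder set \<Rightarrow> bool" where
  "club C \<longleftrightarrow> (\<forall>\<alpha>. \<exists>\<beta>\<in>C. \<alpha> < \<beta>) \<and> (\<forall>\<gamma>. accum_pt \<gamma> C \<longrightarrow> \<gamma> \<in> C)"

definition stationary :: "'l::wellorder set \<Rightarrow> bool" where
  "stationary S \<longleftrightarrow> (\<forall>C. club C \<longrightarrow> S \<inter> C \<noteq> {})"

definition cofinal_in :: "'l::wellorder \<Rightarrow> 'l set \<Rightarrow> bool" where
  "cofinal_in \<delta> X \<longleftrightarrow> X \<subseteq> {..<\<delta>} \<and> (\<forall>\<alpha><\<delta>. \<exists>\<beta>\<in>X. \<alpha> \<le> \<beta>)"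

definition cof_eq :: "'l::wellorder \<Rightarrow> 'l \<Rightarrow> bool" where
  "cof_eq \<delta> \<kappa> \<longleftrightarrow>
     (\<exists>X. cofinal_in \<delta> X \<and> (card_of (X), card_of ({..<\<kappa>})) \<in> ordIso) \<and>
     (\<forall>X. cofinal_in \<delta> X \<longrightarrow> (card_of ({..<\<kappa>}), card_of (X)) \<in> ordLeq)"

definition regular_cardinal_below :: "'l::wellorder \<Rightarrow> bool" where
  "regular_cardinal_below \<kappa> \<longleftrightarrow>
     (\<forall>\<alpha><\<kappa>. (card_of ({..<\<alpha>}), card_of ({..<\<kappa>})) \<in> ordLess) \<and>
     (\<forall>X. cofinal_in \<kappa> X \<longrightarrow> (card_of (X), card_of ({..<\<kappa>})) \<in> ordIso)"

definition regular_cardinal_type :: "'l::wellorder itself \<Rightarrow> bool" where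
  "regular_cardinal_type TYPE('l) \<longleftrightarrow>
     (\<forall>\<alpha>::'l. (card_of ({..<\<alpha>}), card_of (UNIV :: 'l set)) \<in> ordLess) \<and>
     (\<forall>X::'l set. (\<forall>\<alpha>. \<exists>\<beta>\<in>X. \<alpha> \<le> \<beta>) \<longrightarrow> (card_of (X), card_of (UNIV :: 'l set)) \<in> ordIso)"

definition normal_ideal :: "'l::wellorder set set \<Rightarrow> bool" where
  "normal_ideal I \<longleftrightarrow>
     {} \<in> I \<and> UNIV \<notin> I \<and>
     (\<forall>A\<in>I. \<forall>B. B \<subseteq> A \<longrightarrow> B \<in> I) \<and>
     (\<forall>A\<in>I. \<forall>B\<in>I. A \<union> B \<in> I) \<and>
     (\<forall>\<alpha>. {..<\<alpha>} \<in> I) \<and>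
     (\<forall>A :: 'l \<Rightarrow> 'l set. (\<forall>\<alpha>. A \<alpha> \<in> I) \<longrightarrow> {\<beta>. \<exists>\<alpha><\<beta>. \<beta> \<in> A \<alpha>} \<in> I)"

definition saturated_succ :: "'l::wellorder set set \<Rightarrow> bool" where
  "saturated_succ I \<longleftrightarrow>
     (\<forall>F. (\<forall>A\<in>F. A \<notin> I) \<and> (\<forall>A\<in>F. \<forall>B\<in>F. A \<noteq> B \<longrightarrow> A \<inter> B \<in> I)
          \<longrightarrow> (card_of (F), card_of (UNIV :: 'l set)) \<in> ordLeq)"

end

theory Submission
  imports Defs
begin

definition lub :: "'l::wellorder set \<Rightarrow> 'l" where
  "lub X = (LEAST y. \<forall>x\<in>X. x \<le> y)"

lemma lub_ub: "\<forall>x\<in>X. x \<le> u \<Longrightarrow> \<forall>x\<in>X. x \<le> lub X"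
proof -
  assume "\<forall>x\<in>X. x \<le> u"
  then have "\<exists>y. \<forall>x\<in>X. x \<le> y" by blast
  then show "\<forall>x\<in>X. x \<le> lub X" unfolding lub_def by (rule LeastI_ex)
qed

lemma lub_upper: "\<forall>x\<in>X. x \<le> u \<Longrightarrow> x \<in> X \<Longrightarrow> x \<le> lub X"
  using lub_ub by blast

lemma lub_least: "\<forall>x\<in>X. x \<le> u \<Longrightarrow> lub X \<le> u"
  unfolding lub_def by (rule Least_le)

lemma lub_lt: "\<forall>x\<in>X. x \<le> u \<Longrightarrow> b < lub X \<Longrightarrow> \<exists>x\<in>X. b < x"
  using lub_least[of X b] by (metis not_le)

lemma lub_mono: "A \<subseteq> B \<Longrightarrow> \<forall>x\<in>B. x \<le> u \<Longrightarrow> lub A \<le> lub B"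
  by (rule lub_least) (auto intro: lub_upper)

lemma lub_empty_le: "lub {} \<le> x"
  unfolding lub_def by (simp add: Least_le)

lemma lub_closed:
  assumes cl: "\<forall>\<gamma>. accum_pt \<gamma> F \<longrightarrow> \<gamma> \<in> F" and x: "x \<in> F" "x < a"
  shows "lub (F \<inter> {..<a}) \<in> F"
proof -
  let ?X = "F \<inter> {..<a}"
  have ub: "\<forall>y\<in>?X. y \<le> a" by auto
  show ?thesis
  proof (cases "lub ?X \<in> ?X")
    case True then show ?thesis by auto
  next
    case False
    have "accum_pt (lub ?X) F"
      unfolding accum_pt_def
    proof
      show "\<exists>\<beta>\<in>F. \<beta> < lub ?X"
      proof -
        have "x \<in> ?X" using x by auto
        then have "x \<le> lub ?X" using lub_upper[OF ub] by blast
        moreover have "x \<noteq> lub ?X" using False \<open>x \<in> ?X\<close> by auto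
        ultimately have "x < lub ?X" by simp
        then show ?thesis using x(1) by blast
      qed
      show "\<forall>\<alpha><lub ?X. \<exists>\<beta>\<in>F. \<alpha> < \<beta> \<and> \<beta> < lub ?X"
      proof (intro allI impI)
        fix \<alpha> assume "\<alpha> < lub ?X"
        then obtain y where "y \<in> ?X" "\<alpha> < y" using lub_lt[OF ub] by blast
        moreover have "y \<le> lub ?X" using lub_upper[OF ub] \<open>y\<in>?X\<close> by blast
        moreover have "y \<noteq> lub ?X" using False \<open>y\<in>?X\<close> by auto
        ultimately show "\<exists>\<beta>\<in>F. \<alpha> < \<beta> \<and> \<beta> < lub ?X" using \<open>y\<in>?X\<close> by auto
      qed
    qed
    then show ?thesis using cl by blast
  qed
qed

definition wrec :: "('b set \<Rightarrow> 'l::wellorder \<Rightarrow> 'b) \<Rightarrow> 'l \<Rightarrow> 'b" where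
  "wrec H = wfrec {(x,y). x < y} (\<lambda>g i. H (g ` {..<i}) i)"

lemma wrec_eq: "wrec H i = H (wrec H ` {..<i}) i"
proof -
  have "wrec H i = H ((cut (wrec H) {(x,y). x < y} i) ` {..<i}) i"
    unfolding wrec_def by (rule wfrec[OF wellorder_class.wf])
  also have "(cut (wrec H) {(x,y). x < y} i) ` {..<i} = wrec H ` {..<i}"
    unfolding cut_def by (rule image_cong) auto
  finally show ?thesis .
qed

unbundle cardinal_syntax

locale setting =
  fixes \<kappa> :: "'l::wellorder" and I :: "'l set set"
  assumes lam_reg: "regular_cardinal_type TYPE('l)"
    and kap_reg: "regular_cardinal_below \<kappa>"
    and kap_unc: "\<not> countable {..<\<kappa>}"
    and lam_big: "(card_of (Pow {..<\<kappa>}), card_of (UNIV :: 'l set)) \<in> ordLess"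
    and I_normal: "normal_ideal I"
    and I_sat: "saturated_succ I"
begin

lemma lam_reg1: "\<forall>\<alpha>::'l. |{..<\<alpha>}| <o |UNIV :: 'l set|"
  using lam_reg unfolding regular_cardinal_type_def by (rule conjunct1)

lemma lam_reg2: "\<forall>X::'l set. (\<forall>\<alpha>. \<exists>\<beta>\<in>X. \<alpha> \<le> \<beta>) \<longrightarrow> |X| =o |UNIV :: 'l set|"
  using lam_reg unfolding regular_cardinal_type_def by (rule conjunct2)

lemma seg_less: "|{..<\<alpha>::'l}| <o |UNIV :: 'l set|"
  using lam_reg1 by (rule spec)

lemma bounded: assumes "|X::'l set| <o |UNIV :: 'l set|" shows "\<exists>y. \<forall>x\<in>X. x < y"
proof (rule ccontr)
  assume nb: "\<not> ?thesis"
  have "\<forall>\<alpha>. \<exists>\<beta>\<in>X. \<alpha> \<le> \<beta>"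
  proof
    fix \<alpha>
    from nb obtain \<beta> where "\<beta> \<in> X" "\<not> \<beta> < \<alpha>" by auto
    then show "\<exists>\<beta>\<in>X. \<alpha> \<le> \<beta>" by (auto simp: not_less)
  qed
  then have "|X| =o |UNIV :: 'l set|" using lam_reg2 by blast
  then have "|UNIV :: 'l set| \<le>o |X|" using ordIso_iff_ordLeq by auto
  then have "|UNIV :: 'l set| <o |UNIV :: 'l set|" using assms by (rule ordLeq_ordLess_trans)
  then show False by (simp add: ordLess_irreflexive)
qed

lemma bounded_le: assumes "|X::'l set| \<le>o |{..<\<alpha>::'l}|" shows "\<exists>y. \<forall>x\<in>X. x < y"
  using bounded[of X] ordLeq_ordLess_trans[OF assms seg_less] by blast

lemma kap_inf: "\<not> finite {..<\<kappa>}"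
  using kap_unc by (auto intro: countable_finite)

lemma nat_less_kap: "|UNIV :: nat set| <o |{..<\<kappa>}|"
proof -
  have "\<not> |{..<\<kappa>}| \<le>o |UNIV :: nat set|"
  proof
    assume "|{..<\<kappa>}| \<le>o |UNIV :: nat set|"
    then obtain f :: "'l \<Rightarrow> nat" where "inj_on f {..<\<kappa>}"
      using card_of_ordLeq[of "{..<\<kappa>}" "UNIV :: nat set"] by blast
    then have "countable {..<\<kappa>}" by (rule countableI)
    then show False using kap_unc by simp
  qed
  moreover have W: "Well_order |UNIV::nat set|" "Well_order |{..<\<kappa>}|" by (rule card_of_Well_order)+
  ultimately show ?thesis using not_ordLeq_iff_ordLess[OF W] by simp
qed

lemma seq_bounded: "\<exists>y. \<forall>n. (b :: nat \<Rightarrow> 'l) n < y"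
proof -
  have "|range b| \<le>o |UNIV :: nat set|" using card_of_image[of b "UNIV :: nat set"] by simp
  then have "|range b| \<le>o |{..<\<kappa>}|"
    using nat_less_kap ordLess_imp_ordLeq ordLeq_transitive by blast
  then show ?thesis using bounded_le[of "range b"] by auto
qed

lemma no_max: "\<exists>y. (x::'l) < y"
  using seq_bounded[of "\<lambda>_. x"] by auto

lemma lub_seq:
  fixes b :: "nat \<Rightarrow> 'l"
  assumes inc: "\<And>n. b n < b (Suc n)"
  shows "\<forall>n. b n < lub (range b)"
    and "(\<forall>n\<ge>N. \<exists>e\<in>Z. b n < e \<and> e \<le> b (Suc n)) \<Longrightarrow> accum_pt (lub (range b)) Z"
proof -
  obtain u where u: "\<forall>n. b n < u" using seq_bounded[of b] by blast
  then have ub: "\<forall>x\<in>range b. x \<le> u" by (auto intro: less_imp_le)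
  have le: "\<forall>n. b n \<le> lub (range b)" using lub_ub[OF ub] by simp
  show lt: "\<forall>n. b n < lub (range b)"
  proof
    fix n show "b n < lub (range b)" using inc[of n] le[rule_format, of "Suc n"] by (rule less_le_trans)
  qed
  have mono: "\<And>n m. n \<le> m \<Longrightarrow> b n \<le> b m"
  proof -
    fix n m :: nat assume "n \<le> m"
    have "\<And>k. b k \<le> b (Suc k)" using inc by (simp add: less_imp_le)
    then show "b n \<le> b m" using lift_Suc_mono_le[of b n m] \<open>n \<le> m\<close> by simp
  qed
  assume H: "\<forall>n\<ge>N. \<exists>e\<in>Z. b n < e \<and> e \<le> b (Suc n)"
  show "accum_pt (lub (range b)) Z"
    unfolding accum_pt_def
  proof
    obtain e where e: "e \<in> Z" "e \<le> b (Suc N)" using H[rule_format, OF order.refl] by blast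
    have "e < lub (range b)" using e(2) lt[rule_format, of "Suc N"] by (rule le_less_trans)
    then show "\<exists>\<beta>\<in>Z. \<beta> < lub (range b)" using e(1) by blast
    show "\<forall>\<alpha><lub (range b). \<exists>\<beta>\<in>Z. \<alpha> < \<beta> \<and> \<beta> < lub (range b)"
    proof (intro allI impI)
      fix a assume "a < lub (range b)"
      then obtain n where n: "a < b n" using lub_lt[OF ub, of a] by auto
      let ?m = "max n N"
      have "N \<le> ?m" by simp
      then obtain e where e: "e \<in> Z" "b ?m < e" "e \<le> b (Suc ?m)" using H[rule_format, of ?m] by blast
      have "b n \<le> b ?m" using mono by simp
      with n have "a < b ?m" by (rule less_le_trans)
      then have "a < e" using e(2) by (rule less_trans)
      moreover have "e < lub (range b)" using e(3) lt[rule_format, of "Suc ?m"] by (rule le_less_trans)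
      ultimately show "\<exists>\<beta>\<in>Z. a < \<beta> \<and> \<beta> < lub (range b)" using e by blast
    qed
  qed
qed

end

context setting begin

lemma I_facts:
  "{} \<in> I" "UNIV \<notin> I"
  "\<And>A B. A \<in> I \<Longrightarrow> B \<subseteq> A \<Longrightarrow> B \<in> I"
  "\<And>A B. A \<in> I \<Longrightarrow> B \<in> I \<Longrightarrow> A \<union> B \<in> I"
  "\<And>\<alpha>. {..<\<alpha>} \<in> I"
  "\<And>A :: 'l \<Rightarrow> 'l set. (\<forall>\<alpha>. A \<alpha> \<in> I) \<Longrightarrow> {\<beta>. \<exists>\<alpha><\<beta>. \<beta> \<in> A \<alpha>} \<in> I"
  using I_normal unfolding normal_ideal_def by blast+

lemma I_sub: "A \<in> I \<Longrightarrow> B \<subseteq> A \<Longrightarrow> B \<in> I" using I_facts(3) by blast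
lemma I_un: "A \<in> I \<Longrightarrow> B \<in> I \<Longrightarrow> A \<union> B \<in> I" using I_facts(4) by blast
lemma I_bdd: "{..<\<alpha>} \<in> I" using I_facts(5) by blast
lemma I_diag: "(\<And>\<alpha>. A \<alpha> \<in> I) \<Longrightarrow> {\<beta>. \<exists>\<alpha><\<beta>. \<beta> \<in> A \<alpha>} \<in> I" using I_facts(6) by blast

lemma I_le: "{..(x::'l)} \<in> I"
proof -
  obtain y where "x < y" using no_max by blast
  then have "{..x} \<subseteq> {..<y}" by auto
  then show ?thesis using I_bdd I_sub by blast
qed

lemma I_union_lt:
  fixes Y :: "'l \<Rightarrow> 'l set" and \<alpha> :: 'l
  assumes "\<And>\<zeta>. \<zeta> < \<alpha> \<Longrightarrow> Y \<zeta> \<in> I"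
  shows "(\<Union>\<zeta>\<in>{..<\<alpha>}. Y \<zeta>) \<in> I"
proof -
  define A where "A \<zeta> = (if \<zeta> < \<alpha> then Y \<zeta> else {})" for \<zeta>
  have "\<And>\<zeta>. A \<zeta> \<in> I" unfolding A_def using assms I_facts(1) by simp
  then have d: "{\<beta>. \<exists>\<zeta><\<beta>. \<beta> \<in> A \<zeta>} \<in> I" by (rule I_diag)
  have "(\<Union>\<zeta>\<in>{..<\<alpha>}. Y \<zeta>) \<subseteq> {\<beta>. \<exists>\<zeta><\<beta>. \<beta> \<in> A \<zeta>} \<union> {..<\<alpha>}"
  proof
    fix x assume "x \<in> (\<Union>\<zeta>\<in>{..<\<alpha>}. Y \<zeta>)"
    then obtain \<zeta> where z: "\<zeta> < \<alpha>" "x \<in> Y \<zeta>" by auto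
    show "x \<in> {\<beta>. \<exists>\<zeta><\<beta>. \<beta> \<in> A \<zeta>} \<union> {..<\<alpha>}"
    proof (cases "\<zeta> < x")
      case True then show ?thesis using z unfolding A_def by auto
    next
      case False then have "x < \<alpha>" using z(1) by (simp add: not_less le_less_trans)
      then show ?thesis by simp
    qed
  qed
  moreover have "{\<beta>. \<exists>\<zeta><\<beta>. \<beta> \<in> A \<zeta>} \<union> {..<\<alpha>} \<in> I" using d I_bdd by (rule I_un)
  ultimately show ?thesis using I_sub by blast
qed

lemma club_unbdd: "club (E::'l set) \<Longrightarrow> \<exists>\<beta>\<in>E. (\<alpha>::'l) < \<beta>"
  unfolding club_def by blast

lemma club_closed: "club E \<Longrightarrow> accum_pt \<gamma> E \<Longrightarrow> \<gamma> \<in> E"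
  unfolding club_def by blast

lemma accum_mono: "A \<subseteq> B \<Longrightarrow> accum_pt \<gamma> A \<Longrightarrow> accum_pt \<gamma> B"
  unfolding accum_pt_def by blast

lemma inc_mono:
  fixes b :: "nat \<Rightarrow> 'l"
  assumes inc: "\<And>n. b n < b (Suc n)" and "n \<le> m"
  shows "b n \<le> b m"
proof -
  have "\<And>k. b k \<le> b (Suc k)" using inc by (simp add: less_imp_le)
  then show "b n \<le> b m" using lift_Suc_mono_le[of b n m] \<open>n \<le> m\<close> by simp
qed

lemma Inter_club:
  fixes Ee :: "'l \<Rightarrow> 'l set"
  assumes cl: "\<And>\<xi>. \<xi> < \<alpha> \<Longrightarrow> club (Ee \<xi>)"
  shows "club (\<Inter>\<xi>\<in>{..<(\<alpha>::'l)}. Ee \<xi>)"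
proof -
  let ?G = "\<Inter>\<xi>\<in>{..<\<alpha>}. Ee \<xi>"
  have step: "\<exists>y. x < y \<and> (\<forall>\<xi><\<alpha>. \<exists>e\<in>Ee \<xi>. x < e \<and> e < y)" for x
  proof -
    define m where "m \<xi> = (LEAST e. e \<in> Ee \<xi> \<and> x < e)" for \<xi>
    have m: "m \<xi> \<in> Ee \<xi> \<and> x < m \<xi>" if xi: "\<xi> < \<alpha>" for \<xi>
    proof -
      obtain e where "e \<in> Ee \<xi>" "x < e" using club_unbdd[OF cl[OF xi]] by blast
      then have "e \<in> Ee \<xi> \<and> x < e" by simp
      then show ?thesis unfolding m_def by (rule LeastI)
    qed
    have "|m ` {..<\<alpha>}| \<le>o |{..<\<alpha>}|" by (rule card_of_image)
    then obtain y1 where y1: "\<forall>z\<in>m ` {..<\<alpha>}. z < y1" using bounded_le by blast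
    obtain y2 where y2: "x < y2" using no_max by blast
    show ?thesis
    proof (intro exI conjI allI impI)
      show "x < max y1 y2" using y2 by (simp add: less_max_iff_disj)
      fix \<xi> assume "\<xi> < \<alpha>"
      then have "m \<xi> < y1" using y1 by simp
      then show "\<exists>e\<in>Ee \<xi>. x < e \<and> e < max y1 y2" using m[OF \<open>\<xi> < \<alpha>\<close>]
        by (auto simp: less_max_iff_disj)
    qed
  qed
  define nxt where "nxt x = (SOME y. x < y \<and> (\<forall>\<xi><\<alpha>. \<exists>e\<in>Ee \<xi>. x < e \<and> e < y))" for x
  have nxt: "x < nxt x \<and> (\<forall>\<xi><\<alpha>. \<exists>e\<in>Ee \<xi>. x < e \<and> e < nxt x)" for x
    unfolding nxt_def using step[of x] by (rule someI_ex)
  show ?thesis unfolding club_def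
  proof (intro conjI allI impI)
    fix \<beta>0 :: 'l
    define b where "b n = (nxt ^^ n) \<beta>0" for n
    have bS: "b (Suc n) = nxt (b n)" for n unfolding b_def by simp
    have inc: "\<And>n. b n < b (Suc n)" using nxt bS by simp
    let ?g = "lub (range b)"
    have lt: "\<forall>n. b n < ?g" using lub_seq(1)[of b, OF inc] .
    have "?g \<in> Ee \<xi>" if "\<xi> < \<alpha>" for \<xi>
    proof -
      have "\<forall>n\<ge>0. \<exists>e\<in>Ee \<xi>. b n < e \<and> e \<le> b (Suc n)"
        using nxt that bS by (metis less_imp_le)
      then have "accum_pt ?g (Ee \<xi>)" by (rule lub_seq(2)[of b, OF inc])
      then show ?thesis using club_closed[OF cl[OF that]] by blast
    qed
    then have "?g \<in> ?G" by blast
    moreover have "\<beta>0 < ?g" using lt[rule_format, of 0] unfolding b_def by simp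
    ultimately show "\<exists>\<beta>\<in>?G. \<beta>0 < \<beta>" by blast
  next
    fix \<gamma> assume "accum_pt \<gamma> ?G"
    have "\<gamma> \<in> Ee \<xi>" if "\<xi> < \<alpha>" for \<xi>
    proof -
      have "?G \<subseteq> Ee \<xi>" using that by blast
      then have "accum_pt \<gamma> (Ee \<xi>)" using accum_mono \<open>accum_pt \<gamma> ?G\<close> by blast
      then show ?thesis using club_closed[OF cl[OF that]] by blast
    qed
    then show "\<gamma> \<in> ?G" by blast
  qed
qed


lemma Diag_club:
  fixes Ee :: "'l \<Rightarrow> 'l set"
  assumes cl: "\<And>i. club (Ee i)"
  shows "club {\<beta>. \<forall>i<\<beta>. \<beta> \<in> Ee i}"
proof -
  let ?D = "{\<beta>. \<forall>i<\<beta>. \<beta> \<in> Ee i}"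
  have step: "\<exists>y. x < y \<and> (\<forall>i\<le>x. y \<in> Ee i)" for x
  proof -
    obtain z where z: "x < z" using no_max by blast
    have "club (\<Inter>\<xi>\<in>{..<z}. Ee \<xi>)" by (rule Inter_club) (rule cl)
    then obtain y where y: "y \<in> (\<Inter>\<xi>\<in>{..<z}. Ee \<xi>)" "x < y" using club_unbdd by blast
    have "\<forall>i\<le>x. y \<in> Ee i" using y(1) z by (auto dest: le_less_trans)
    then show ?thesis using y(2) by blast
  qed
  define nxt where "nxt x = (SOME y. x < y \<and> (\<forall>i\<le>x. y \<in> Ee i))" for x
  have nxt: "x < nxt x \<and> (\<forall>i\<le>x. nxt x \<in> Ee i)" for x
    unfolding nxt_def using step[of x] by (rule someI_ex)
  show ?thesis unfolding club_def
  proof (intro conjI allI impI)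
    fix \<beta>0 :: 'l
    define b where "b n = (nxt ^^ n) \<beta>0" for n
    have bS: "b (Suc n) = nxt (b n)" for n unfolding b_def by simp
    have inc: "\<And>n. b n < b (Suc n)" using nxt bS by simp
    let ?g = "lub (range b)"
    obtain u where u: "\<forall>n. b n < u" using seq_bounded[of b] by blast
    then have ub: "\<forall>x\<in>range b. x \<le> u" by (auto intro: less_imp_le)
    have lt: "\<forall>n. b n < ?g" using lub_seq(1)[of b, OF inc] .
    have "?g \<in> Ee i" if ig: "i < ?g" for i
    proof -
      obtain n where n: "i < b n" using lub_lt[OF ub ig] by auto
      have "\<forall>m\<ge>n. \<exists>e\<in>Ee i. b m < e \<and> e \<le> b (Suc m)"
      proof (intro allI impI)
        fix m assume "n \<le> m"
        then have "b n \<le> b m" by (rule inc_mono[of b, OF inc])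
        then have "i \<le> b m" using n by simp
        then have "b (Suc m) \<in> Ee i" using nxt[of "b m"] bS by simp
        then show "\<exists>e\<in>Ee i. b m < e \<and> e \<le> b (Suc m)" using inc[of m] by blast
      qed
      then have "accum_pt ?g (Ee i)" by (rule lub_seq(2)[of b, OF inc])
      then show ?thesis using club_closed[OF cl] by blast
    qed
    then have "?g \<in> ?D" by blast
    moreover have "\<beta>0 < ?g" using lt[rule_format, of 0] unfolding b_def by simp
    ultimately show "\<exists>\<beta>\<in>?D. \<beta>0 < \<beta>" by blast
  next
    fix \<gamma> assume acc: "accum_pt \<gamma> ?D"
    have "\<gamma> \<in> Ee i" if ig: "i < \<gamma>" for i
    proof -
      have "accum_pt \<gamma> (Ee i)" unfolding accum_pt_def
      proof
        obtain \<beta> where "\<beta> \<in> ?D" "i < \<beta>" "\<beta> < \<gamma>" using acc ig unfolding accum_pt_def by blast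
        then show "\<exists>\<beta>\<in>Ee i. \<beta> < \<gamma>" by blast
        show "\<forall>\<alpha><\<gamma>. \<exists>\<beta>\<in>Ee i. \<alpha> < \<beta> \<and> \<beta> < \<gamma>"
        proof (intro allI impI)
          fix a assume "a < \<gamma>"
          then have "max a i < \<gamma>" using ig by simp
          then obtain \<beta> where "\<beta> \<in> ?D" "max a i < \<beta>" "\<beta> < \<gamma>" using acc unfolding accum_pt_def by blast
          then show "\<exists>\<beta>\<in>Ee i. a < \<beta> \<and> \<beta> < \<gamma>" by auto
        qed
      qed
      then show ?thesis using club_closed[OF cl] by blast
    qed
    then show "\<gamma> \<in> ?D" by blast
  qed
qed

lemma NS_in_I:
  assumes E: "club (E::'l set)"
  shows "{\<beta>. \<not> accum_pt \<beta> E} \<in> I"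
proof -
  define A where "A a = {\<beta>. a < \<beta> \<and> (\<forall>e\<in>E. \<not> (a < e \<and> e < \<beta>))}" for a
  have AI: "A a \<in> I" for a
  proof -
    obtain m where m: "m \<in> E" "a < m" using club_unbdd[OF E] by blast
    have "A a \<subseteq> {..m}" unfolding A_def using m by (auto simp: not_less)
    then show ?thesis using I_le I_sub by blast
  qed
  have d: "{\<beta>. \<exists>a<\<beta>. \<beta> \<in> A a} \<in> I" using AI by (rule I_diag)
  obtain e0 where e0: "e0 \<in> E" using club_unbdd[OF E] by blast
  have "{\<beta>. \<not> accum_pt \<beta> E} \<subseteq> {\<beta>. \<exists>a<\<beta>. \<beta> \<in> A a} \<union> {..e0}"
  proof
    fix \<beta> assume "\<beta> \<in> {\<beta>. \<not> accum_pt \<beta> E}"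
    then have na: "\<not> accum_pt \<beta> E" by simp
    show "\<beta> \<in> {\<beta>. \<exists>a<\<beta>. \<beta> \<in> A a} \<union> {..e0}"
    proof (cases "e0 < \<beta>")
      case True
      then have "\<not> (\<forall>\<alpha><\<beta>. \<exists>\<gamma>\<in>E. \<alpha> < \<gamma> \<and> \<gamma> < \<beta>)" using na e0 unfolding accum_pt_def by blast
      then obtain a where "a < \<beta>" "\<forall>e\<in>E. \<not> (a < e \<and> e < \<beta>)" by blast
      then show ?thesis unfolding A_def by blast
    next
      case False then show ?thesis by (simp add: not_less)
    qed
  qed
  moreover have "{\<beta>. \<exists>a<\<beta>. \<beta> \<in> A a} \<union> {..e0} \<in> I" using d I_le by (rule I_un)
  ultimately show ?thesis using I_sub by blast
qed

end

context setting begin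

lemma kap_reg1: "\<forall>\<alpha><\<kappa>. |{..<\<alpha>}| <o |{..<\<kappa>}|"
  using kap_reg unfolding regular_cardinal_below_def by (rule conjunct1)

lemma kap_reg2: "\<forall>X. cofinal_in \<kappa> X \<longrightarrow> |X| =o |{..<\<kappa>}|"
  using kap_reg unfolding regular_cardinal_below_def by (rule conjunct2)

lemma enum_iso:
  fixes C :: "'l set"
  assumes seg: "\<And>c. c \<in> C \<Longrightarrow> |C \<inter> {..<c}| <o |{..<\<kappa>}|"
    and big: "|{..<\<kappa>}| \<le>o |C|"
  shows "\<exists>f. bij_betw f {..<\<kappa>} C \<and> strict_mono_on {..<\<kappa>} f"
proof -
  define f :: "'l \<Rightarrow> 'l" where "f = wrec (\<lambda>P i. LEAST c. c \<in> C \<and> c \<notin> P)"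
  have feq: "f i = (LEAST c. c \<in> C \<and> c \<notin> f ` {..<i})" for i
    unfolding f_def by (subst wrec_eq) simp
  have ne: "\<exists>c. c \<in> C \<and> c \<notin> f ` {..<i}" if i: "i < \<kappa>" for i
  proof (rule ccontr)
    assume "\<not> ?thesis"
    then have "C \<subseteq> f ` {..<i}" by blast
    then have "|C| \<le>o |f ` {..<i}|" by (rule card_of_mono1)
    moreover have "|f ` {..<i}| \<le>o |{..<i}|" by (rule card_of_image)
    ultimately have "|C| \<le>o |{..<i}|" by (rule ordLeq_transitive)
    moreover have "|{..<i}| <o |{..<\<kappa>}|" using kap_reg1 i by blast
    ultimately have "|C| <o |{..<\<kappa>}|" by (rule ordLeq_ordLess_trans)
    then have "|C| <o |C|" using big by (rule ordLess_ordLeq_trans)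
    then show False by (simp add: ordLess_irreflexive)
  qed
  have fi: "f i \<in> C \<and> f i \<notin> f ` {..<i}" if i: "i < \<kappa>" for i
    unfolding feq[of i] using ne[OF i] by (metis (mono_tags, lifting) LeastI)
  have fl: "f i \<le> c" if "c \<in> C" "c \<notin> f ` {..<i}" for i c
    unfolding feq[of i] using that by (simp add: Least_le)
  have sm: "strict_mono_on {..<\<kappa>} f"
  proof (rule strict_mono_onI)
    fix i j assume ij: "i \<in> {..<\<kappa>}" "j \<in> {..<\<kappa>}" "i < j"
    have j: "f j \<in> C" "f j \<notin> f ` {..<j}" using fi ij(2) by auto
    then have "f j \<notin> f ` {..<i}" using ij(3) by auto
    then have "f i \<le> f j" using fl j(1) by blast
    moreover have "f i \<in> f ` {..<j}" using ij(3) by simp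
    then have "f i \<noteq> f j" using j(2) by metis
    ultimately show "f i < f j" by simp
  qed
  then have inj: "inj_on f {..<\<kappa>}" by (rule strict_mono_on_imp_inj_on)
  have sub: "f ` {..<\<kappa>} \<subseteq> C" using fi by auto
  have "C \<subseteq> f ` {..<\<kappa>}"
  proof
    fix c assume c: "c \<in> C"
    show "c \<in> f ` {..<\<kappa>}"
    proof (rule ccontr)
      assume nc: "c \<notin> f ` {..<\<kappa>}"
      have "f i < c" if i: "i < \<kappa>" for i
      proof -
        have "c \<notin> f ` {..<i}" using nc i by auto
        then have "f i \<le> c" using fl c by blast
        moreover have "f i \<noteq> c" using nc i by auto
        ultimately show ?thesis by simp
      qed
      then have "f ` {..<\<kappa>} \<subseteq> C \<inter> {..<c}" using sub by auto
      then have "|{..<\<kappa>}| \<le>o |C \<inter> {..<c}|" using inj card_of_ordLeq by blast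
      then have "|{..<\<kappa>}| <o |{..<\<kappa>}|" using seg[OF c] by (rule ordLeq_ordLess_trans)
      then show False by (simp add: ordLess_irreflexive)
    qed
  qed
  then have "f ` {..<\<kappa>} = C" using sub by blast
  then have "bij_betw f {..<\<kappa>} C" using inj unfolding bij_betw_def by blast
  then show ?thesis using sm by blast
qed

lemma L_club:
  fixes t :: "'l \<Rightarrow> 'l" and \<delta> :: 'l
  assumes cof: "cof_eq \<delta> \<kappa>"
    and mono: "\<And>i j. i \<le> j \<Longrightarrow> j < \<kappa> \<Longrightarrow> t i \<le> t j"
    and bnd: "\<And>i. i < \<kappa> \<Longrightarrow> t i < \<delta>"
    and cofin: "\<And>\<beta>. \<beta> < \<delta> \<Longrightarrow> \<exists>i<\<kappa>. \<beta> < t i"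
    and cont: "\<And>i \<beta>. i < \<kappa> \<Longrightarrow> (\<forall>j<i. \<exists>k. j < k \<and> k < i) \<Longrightarrow> \<beta> < t i \<Longrightarrow> \<exists>j<i. \<beta> < t j"
  shows "club_below \<delta> (t ` {..<\<kappa>}) \<and> (\<exists>f. bij_betw f {..<\<kappa>} (t ` {..<\<kappa>}) \<and> strict_mono_on {..<\<kappa>} f)"
proof -
  let ?C = "t ` {..<\<kappa>}"
  have sub: "?C \<subseteq> {..<\<delta>}" using bnd by auto
  have unb: "unbounded_below \<delta> ?C" unfolding unbounded_below_def using sub cofin by blast
  have closed: "\<gamma> \<in> ?C" if g: "\<gamma> < \<delta>" "accum_pt \<gamma> ?C" for \<gamma>
  proof -
    obtain i0 where i0: "i0 < \<kappa>" "\<gamma> < t i0" using cofin[OF g(1)] by blast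
    define i where "i = (LEAST i. i < \<kappa> \<and> \<gamma> \<le> t i)"
    have ii: "i < \<kappa> \<and> \<gamma> \<le> t i" unfolding i_def
      by (rule LeastI[of _ i0]) (use i0 in auto)
    have below: "t j < \<gamma>" if "j < i" for j
    proof -
      have "j < \<kappa>" using less_trans[OF that conjunct1[OF ii]] .
      moreover have "\<not> (j < \<kappa> \<and> \<gamma> \<le> t j)" using not_less_Least[of j] that unfolding i_def by blast
      ultimately show ?thesis by simp
    qed
    show ?thesis
    proof (cases "\<forall>j<i. \<exists>k. j < k \<and> k < i")
      case True
      have "\<not> \<gamma> < t i"
      proof
        assume "\<gamma> < t i"
        then obtain j where "j < i" "\<gamma> < t j" using cont[of i \<gamma>] ii True by blast
        then show False using below by (meson less_asym)
      qed
      then have "t i = \<gamma>" using ii by simp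
      then show ?thesis using ii by blast
    next
      case False
      then obtain j where j: "j < i" "\<forall>k. \<not> (j < k \<and> k < i)" by blast
      have "t j < \<gamma>" using below j(1) .
      then obtain c where c: "c \<in> ?C" "t j < c" "c < \<gamma>" using g(2) unfolding accum_pt_def by blast
      then obtain k where k: "k < \<kappa>" "c = t k" by blast
      show ?thesis
      proof (cases "i \<le> k")
        case True
        then have "t i \<le> t k" using mono k(1) by blast
        have "\<gamma> \<le> t k" using order.trans[OF conjunct2[OF ii] \<open>t i \<le> t k\<close>] .
        then have False using c(3) k(2) by simp
        then show ?thesis ..
      next
        case False
        then have "k \<le> j" using j(2) by (meson not_le)
        then have "t k \<le> t j" using mono j(1) ii by (meson less_trans)
        then show ?thesis using c k by simp
      qed
    qed
  qed
  have club: "club_below \<delta> ?C" unfolding club_below_def using unb closed by blast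
  have seg: "|?C \<inter> {..<c}| <o |{..<\<kappa>}|" if c: "c \<in> ?C" for c
  proof -
    obtain i where i: "i < \<kappa>" "c = t i" using c by blast
    have "?C \<inter> {..<c} \<subseteq> t ` {..<i}"
    proof
      fix x assume "x \<in> ?C \<inter> {..<c}"
      then obtain j where j: "j < \<kappa>" "x = t j" "t j < t i" using i by auto
      have "\<not> i \<le> j" using mono[of i j] j by auto
      then show "x \<in> t ` {..<i}" using j by (simp add: not_le)
    qed
    then have "|?C \<inter> {..<c}| \<le>o |t ` {..<i}|" by (rule card_of_mono1)
    moreover have "|t ` {..<i}| \<le>o |{..<i}|" by (rule card_of_image)
    ultimately have "|?C \<inter> {..<c}| \<le>o |{..<i}|" by (rule ordLeq_transitive)
    moreover have "|{..<i}| <o |{..<\<kappa>}|" using kap_reg1 i by blast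
    ultimately show ?thesis by (rule ordLeq_ordLess_trans)
  qed
  have "\<forall>\<alpha><\<delta>. \<exists>\<beta>\<in>?C. \<alpha> \<le> \<beta>"
  proof (intro allI impI)
    fix \<alpha> assume "\<alpha> < \<delta>"
    then obtain i where "i < \<kappa>" "\<alpha> < t i" using cofin by blast
    then show "\<exists>\<beta>\<in>?C. \<alpha> \<le> \<beta>" by (auto intro: less_imp_le)
  qed
  then have "cofinal_in \<delta> ?C" unfolding cofinal_in_def using sub by blast
  then have big: "|{..<\<kappa>}| \<le>o |?C|" using cof unfolding cof_eq_def by blast
  show ?thesis using club enum_iso[OF seg big] by blast
qed

end

context setting begin

lemma lim_kap: assumes j: "j < \<kappa>" shows "\<exists>i. j < i \<and> i < \<kappa>"
proof (rule ccontr)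
  assume "\<not> ?thesis"
  then have "\<forall>\<alpha><\<kappa>. \<exists>\<beta>\<in>{j}. \<alpha> \<le> \<beta>" by (auto simp: not_less)
  then have "cofinal_in \<kappa> {j}" unfolding cofinal_in_def using j by auto
  then have "|{j}| =o |{..<\<kappa>}|" using kap_reg2 by blast
  then have "|{..<\<kappa>}| \<le>o |{j}|" using ordIso_iff_ordLeq by auto
  then have "finite {..<\<kappa>}" by (rule card_of_ordLeq_finite) simp
  then show False using kap_inf by simp
qed

lemma lim_delta: assumes cof: "cof_eq \<delta> \<kappa>" and b: "\<beta> < \<delta>" shows "\<exists>\<beta>'. \<beta> < \<beta>' \<and> \<beta>' < \<delta>"
proof (rule ccontr)
  assume "\<not> ?thesis"
  then have "\<forall>\<alpha><\<delta>. \<exists>\<beta>'\<in>{\<beta>}. \<alpha> \<le> \<beta>'" by (auto simp: not_less)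
  then have "cofinal_in \<delta> {\<beta>}" unfolding cofinal_in_def using b by auto
  then have "|{..<\<kappa>}| \<le>o |{\<beta>}|" using cof unfolding cof_eq_def by blast
  then have "finite {..<\<kappa>}" by (rule card_of_ordLeq_finite) simp
  then show False using kap_inf by simp
qed

definition XX :: "'l \<Rightarrow> 'l set" where
  "XX \<delta> = (SOME X. cofinal_in \<delta> X \<and> (card_of X, card_of {..<\<kappa>}) \<in> ordIso)"
definition hh :: "'l \<Rightarrow> 'l \<Rightarrow> 'l" where
  "hh \<delta> = (SOME h. bij_betw h {..<\<kappa>} (XX \<delta>))"
definition sq :: "'l \<Rightarrow> 'l \<Rightarrow> 'l" where
  "sq \<delta> i = lub (hh \<delta> ` {..<i})"
definition tF :: "'l set \<Rightarrow> 'l \<Rightarrow> 'l \<Rightarrow> 'l" where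
  "tF F \<delta> i = lub (F \<inter> {..< sq \<delta> i})"
definition Cset :: "'l set \<Rightarrow> 'l \<Rightarrow> 'l set" where
  "Cset F \<delta> = tF F \<delta> ` {..<\<kappa>}"

lemma XX_props:
  assumes cof: "cof_eq \<delta> \<kappa>"
  shows "cofinal_in \<delta> (XX \<delta>)" "bij_betw (hh \<delta>) {..<\<kappa>} (XX \<delta>)"
proof -
  have "\<exists>X. cofinal_in \<delta> X \<and> (card_of X, card_of {..<\<kappa>}) \<in> ordIso" using cof unfolding cof_eq_def by blast
  then have X: "cofinal_in \<delta> (XX \<delta>) \<and> (card_of (XX \<delta>), card_of {..<\<kappa>}) \<in> ordIso" unfolding XX_def by (rule someI_ex)
  then show "cofinal_in \<delta> (XX \<delta>)" by blast
  have "|{..<\<kappa>}| =o |XX \<delta>|" using X ordIso_symmetric by blast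
  then have "\<exists>h. bij_betw h {..<\<kappa>} (XX \<delta>)" using card_of_ordIso by blast
  then show "bij_betw (hh \<delta>) {..<\<kappa>} (XX \<delta>)" unfolding hh_def by (rule someI_ex)
qed

lemma sq_props:
  assumes cof: "cof_eq \<delta> \<kappa>"
  shows sq_bnd: "\<And>i. i < \<kappa> \<Longrightarrow> sq \<delta> i < \<delta>"
    and sq_mono: "\<And>i j. i \<le> j \<Longrightarrow> j < \<kappa> \<Longrightarrow> sq \<delta> i \<le> sq \<delta> j"
    and sq_cofin: "\<And>\<beta>. \<beta> < \<delta> \<Longrightarrow> \<exists>i<\<kappa>. \<beta> < sq \<delta> i"
    and sq_cont: "\<And>i \<beta>. i < \<kappa> \<Longrightarrow> (\<forall>j<i. \<exists>k. j < k \<and> k < i) \<Longrightarrow> \<beta> < sq \<delta> i \<Longrightarrow> \<exists>j<i. \<beta> < sq \<delta> j"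
proof -
  have cf: "cofinal_in \<delta> (XX \<delta>)" and bij: "bij_betw (hh \<delta>) {..<\<kappa>} (XX \<delta>)" using XX_props[OF cof] by auto
  have Xd: "XX \<delta> \<subseteq> {..<\<delta>}" using cf unfolding cofinal_in_def by blast
  have hd: "hh \<delta> j < \<delta>" if "j < \<kappa>" for j using bij Xd that unfolding bij_betw_def by auto
  have ub: "\<forall>x\<in>hh \<delta> ` {..<i}. x \<le> \<delta>" if "i < \<kappa>" for i
    using hd that by (auto intro: less_imp_le less_trans)
  show bnd: "sq \<delta> i < \<delta>" if i: "i < \<kappa>" for i
  proof -
    let ?Y = "hh \<delta> ` {..<i}"
    have "|?Y| \<le>o |{..<i}|" by (rule card_of_image)
    moreover have "|{..<i}| <o |{..<\<kappa>}|" using kap_reg1 i by blast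
    ultimately have Yl: "|?Y| <o |{..<\<kappa>}|" by (rule ordLeq_ordLess_trans)
    have "\<not> cofinal_in \<delta> ?Y"
    proof
      assume "cofinal_in \<delta> ?Y"
      then have "|{..<\<kappa>}| \<le>o |?Y|" using cof unfolding cof_eq_def by blast
      then have "|?Y| <o |?Y|" using Yl by (rule ordLess_ordLeq_trans[rotated])
      then show False by (simp add: ordLess_irreflexive)
    qed
    moreover have "?Y \<subseteq> {..<\<delta>}" using hd i by auto
    ultimately obtain \<alpha> where a: "\<alpha> < \<delta>" "\<forall>\<beta>\<in>?Y. \<not> \<alpha> \<le> \<beta>" unfolding cofinal_in_def by blast
    then have "\<forall>\<beta>\<in>?Y. \<beta> \<le> \<alpha>" by (auto simp: not_le intro: less_imp_le)
    then have "sq \<delta> i \<le> \<alpha>" unfolding sq_def by (rule lub_least)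
    then show ?thesis using a(1) by (rule le_less_trans)
  qed
  show "sq \<delta> i \<le> sq \<delta> j" if "i \<le> j" "j < \<kappa>" for i j
    unfolding sq_def by (rule lub_mono[OF _ ub[OF that(2)]]) (use that in auto)
  show "\<exists>i<\<kappa>. \<beta> < sq \<delta> i" if b: "\<beta> < \<delta>" for \<beta>
  proof -
    obtain \<beta>' where b': "\<beta> < \<beta>'" "\<beta>' < \<delta>" using lim_delta[OF cof b] by blast
    then obtain x where x: "x \<in> XX \<delta>" "\<beta>' \<le> x" using cf unfolding cofinal_in_def by blast
    then obtain j where j: "j < \<kappa>" "x = hh \<delta> j" using bij unfolding bij_betw_def by auto
    obtain i where i: "j < i" "i < \<kappa>" using lim_kap[OF j(1)] by blast
    have "x \<le> sq \<delta> i" unfolding sq_def using lub_upper[OF ub[OF i(2)]] j i by auto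
    then have "\<beta> < sq \<delta> i" using b' x(2) by (meson less_le_trans order.trans)
    then show ?thesis using i by blast
  qed
  show "\<exists>j<i. \<beta> < sq \<delta> j" if i: "i < \<kappa>" "\<forall>j<i. \<exists>k. j < k \<and> k < i" "\<beta> < sq \<delta> i" for i \<beta>
  proof -
    obtain x where x: "x \<in> hh \<delta> ` {..<i}" "\<beta> < x" using lub_lt[OF ub[OF i(1)]] i(3) unfolding sq_def by blast
    then obtain j where j: "j < i" "x = hh \<delta> j" by auto
    obtain k where k: "j < k" "k < i" using i(2) j(1) by blast
    have ki: "k < \<kappa>" using k(2) i(1) by (rule less_trans)
    have "x \<le> sq \<delta> k" unfolding sq_def using lub_upper[OF ub[OF ki]] j k by auto
    with x(2) have "\<beta> < sq \<delta> k" by (rule less_le_trans)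
    then show ?thesis using k by blast
  qed
qed


lemma tF_le_sq: "tF F \<delta> i \<le> sq \<delta> i"
  unfolding tF_def by (rule lub_least) auto

lemma tF_ub: "\<forall>x\<in>F \<inter> {..< sq \<delta> i}. x \<le> sq \<delta> i"
  by auto

lemma tF_anti: "F' \<subseteq> F \<Longrightarrow> tF F' \<delta> i \<le> tF F \<delta> i"
  unfolding tF_def by (rule lub_mono[OF _ tF_ub]) auto

lemma tF_in:
  assumes F: "club F"
  shows "tF F \<delta> i \<in> F \<or> tF F \<delta> i = lub {}"
proof (cases "F \<inter> {..< sq \<delta> i} = {}")
  case True then show ?thesis unfolding tF_def by simp
next
  case False
  then obtain x where "x \<in> F" "x < sq \<delta> i" by auto
  then have "tF F \<delta> i \<in> F" unfolding tF_def
    by (rule lub_closed[rotated]) (use F club_def in blast)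
  then show ?thesis by blast
qed

lemma Cset_sub: assumes cof: "cof_eq \<delta> \<kappa>" shows "Cset F \<delta> \<subseteq> {..<\<delta>}"
proof
  fix x assume "x \<in> Cset F \<delta>"
  then obtain i where "i < \<kappa>" "x = tF F \<delta> i" unfolding Cset_def by auto
  then show "x \<in> {..<\<delta>}" using le_less_trans[OF tF_le_sq sq_bnd[OF cof]] by simp
qed

lemma tF_club:
  assumes cof: "cof_eq \<delta> \<kappa>" and acc: "accum_pt \<delta> F"
  shows "club_below \<delta> (Cset F \<delta>) \<and> (\<exists>f. bij_betw f {..<\<kappa>} (Cset F \<delta>) \<and> strict_mono_on {..<\<kappa>} f)"
  unfolding Cset_def
proof (rule L_club[OF cof])
  show "tF F \<delta> i \<le> tF F \<delta> j" if "i \<le> j" "j < \<kappa>" for i j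
  proof -
    have "sq \<delta> i \<le> sq \<delta> j" using sq_mono[OF cof that] .
    then have "F \<inter> {..< sq \<delta> i} \<subseteq> F \<inter> {..< sq \<delta> j}" by auto
    then show ?thesis unfolding tF_def by (rule lub_mono[OF _ tF_ub])
  qed
  show "tF F \<delta> i < \<delta>" if "i < \<kappa>" for i
    using tF_le_sq sq_bnd[OF cof that] by (rule le_less_trans)
  show "\<exists>i<\<kappa>. \<beta> < tF F \<delta> i" if b: "\<beta> < \<delta>" for \<beta>
  proof -
    obtain x where x: "x \<in> F" "\<beta> < x" "x < \<delta>" using acc b unfolding accum_pt_def by blast
    obtain i where i: "i < \<kappa>" "x < sq \<delta> i" using sq_cofin[OF cof x(3)] by blast
    have "x \<le> tF F \<delta> i" unfolding tF_def by (rule lub_upper[OF tF_ub]) (use x i in blast)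
    with x(2) have "\<beta> < tF F \<delta> i" by (rule less_le_trans)
    then show ?thesis using i by blast
  qed
  show "\<exists>j<i. \<beta> < tF F \<delta> j" if i: "i < \<kappa>" "\<forall>j<i. \<exists>k. j < k \<and> k < i" "\<beta> < tF F \<delta> i" for i \<beta>
  proof -
    obtain x where x: "x \<in> F \<inter> {..< sq \<delta> i}" "\<beta> < x" using lub_lt[OF tF_ub] i(3) unfolding tF_def by blast
    then obtain j where j: "j < i" "x < sq \<delta> j" using sq_cont[OF cof i(1) i(2), of x] by auto
    have "x \<le> tF F \<delta> j" unfolding tF_def by (rule lub_upper[OF tF_ub]) (use x j in blast)
    with x(2) have "\<beta> < tF F \<delta> j" by (rule less_le_trans)
    then show ?thesis using j by blast
  qed
qed

lemma sq_club:
  assumes cof: "cof_eq \<delta> \<kappa>"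
  shows "club_below \<delta> (sq \<delta> ` {..<\<kappa>}) \<and> (\<exists>f. bij_betw f {..<\<kappa>} (sq \<delta> ` {..<\<kappa>}) \<and> strict_mono_on {..<\<kappa>} f)"
  by (rule L_club[OF cof sq_mono[OF cof] sq_bnd[OF cof] sq_cofin[OF cof] sq_cont[OF cof]]) auto

end

context setting begin

lemma club_UNIV: "club (UNIV :: 'l set)"
  unfolding club_def using no_max by blast

lemma max_bad:
  fixes B :: "'l set \<Rightarrow> 'l set"
  assumes diag: "\<And>Ee::'l \<Rightarrow> 'l set. (\<forall>i. club (Ee i)) \<Longrightarrow> \<exists>E0. club E0 \<and> (\<forall>i. B (Ee i) - B E0 \<in> I)"
  shows "\<exists>E. club E \<and> (\<forall>D. club D \<longrightarrow> B D - B E \<in> I)"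
proof (rule ccontr)
  assume contra: "\<not> ?thesis"
  define P where "P = {\<F>. (\<forall>X\<in>\<F>. X \<notin> I \<and> (\<exists>D. club D \<and> X \<subseteq> B D)) \<and> (\<forall>X\<in>\<F>. \<forall>Y\<in>\<F>. X \<noteq> Y \<longrightarrow> X \<inter> Y \<in> I)}"
  have "\<forall>C\<in>chains P. \<Union>C \<in> P"
  proof
    fix C assume C: "C \<in> chains P"
    have CP: "C \<subseteq> P" using C by (rule chainsD2)
    show "\<Union>C \<in> P" unfolding P_def
    proof (intro CollectI conjI ballI impI)
      fix X assume "X \<in> \<Union>C"
      then obtain \<F> where "\<F> \<in> C" "X \<in> \<F>" by blast
      then show "X \<notin> I" "\<exists>D. club D \<and> X \<subseteq> B D" using CP unfolding P_def by blast+
    next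
      fix X Y assume XY: "X \<in> \<Union>C" "Y \<in> \<Union>C" "X \<noteq> Y"
      then obtain \<F>1 \<F>2 where F: "\<F>1 \<in> C" "X \<in> \<F>1" "\<F>2 \<in> C" "Y \<in> \<F>2" by blast
      from chainsD[OF C F(1) F(3)] have "X \<in> \<F>2 \<and> Y \<in> \<F>2 \<or> X \<in> \<F>1 \<and> Y \<in> \<F>1" using F by blast
      then show "X \<inter> Y \<in> I" using CP F XY(3) unfolding P_def by blast
    qed
  qed
  then obtain M where M: "M \<in> P" and Mmax: "\<forall>X\<in>P. M \<subseteq> X \<longrightarrow> X = M" using Zorn_Lemma by blast
  have Mpos: "\<forall>X\<in>M. X \<notin> I" and Mpw: "\<forall>X\<in>M. \<forall>Y\<in>M. X \<noteq> Y \<longrightarrow> X \<inter> Y \<in> I"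
    and MB: "\<forall>X\<in>M. \<exists>D. club D \<and> X \<subseteq> B D" using M unfolding P_def by blast+
  have "|M| \<le>o |UNIV :: 'l set|" using I_sat Mpos Mpw unfolding saturated_succ_def by blast
  then obtain g :: "'l set \<Rightarrow> 'l" where g: "inj_on g M" using card_of_ordLeq[of M "UNIV :: 'l set"] by blast
  define DX where "DX X = (SOME D. club D \<and> X \<subseteq> B D)" for X
  have DX: "club (DX X) \<and> X \<subseteq> B (DX X)" if "X \<in> M" for X
    unfolding DX_def using MB that by (metis (mono_tags, lifting) someI_ex)
  define Ee where "Ee i = (if i \<in> g ` M then DX (inv_into M g i) else UNIV)" for i
  have Eecl: "\<forall>i. club (Ee i)"
  proof
    fix i show "club (Ee i)"
    proof (cases "i \<in> g ` M")
      case True then show ?thesis unfolding Ee_def using DX inv_into_into[OF True] by simp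
    next
      case False then show ?thesis unfolding Ee_def using club_UNIV by simp
    qed
  qed
  obtain E0 where E0: "club E0" "\<forall>i. B (Ee i) - B E0 \<in> I" using diag[OF Eecl] by blast
  obtain D where D: "club D" "B D - B E0 \<notin> I" using contra E0(1) by blast
  let ?Y = "B D - B E0"
  have XsmallE: "X - B E0 \<in> I" if X: "X \<in> M" for X
  proof -
    have "Ee (g X) = DX X" unfolding Ee_def using X g by simp
    then have "X - B E0 \<subseteq> B (Ee (g X)) - B E0" using DX[OF X] by auto
    then show ?thesis using E0(2) I_sub by blast
  qed
  have YnM: "?Y \<notin> M"
  proof
    assume "?Y \<in> M"
    then have "?Y - B E0 \<in> I" by (rule XsmallE)
    moreover have "?Y - B E0 = ?Y" by blast
    ultimately show False using D(2) by simp
  qed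
  have "insert ?Y M \<in> P" unfolding P_def
  proof (intro CollectI conjI ballI impI)
    fix X assume "X \<in> insert ?Y M"
    then show "X \<notin> I" "\<exists>D. club D \<and> X \<subseteq> B D" using Mpos MB D by auto
  next
    fix X Y assume XY: "X \<in> insert ?Y M" "Y \<in> insert ?Y M" "X \<noteq> Y"
    show "X \<inter> Y \<in> I"
    proof (cases "X = ?Y")
      case True
      then have "Y \<in> M" using XY by auto
      then have "Y - B E0 \<in> I" by (rule XsmallE)
      moreover have "X \<inter> Y \<subseteq> Y - B E0" using True by blast
      ultimately show ?thesis using I_sub by blast
    next
      case False
      then have X: "X \<in> M" using XY by auto
      show ?thesis
      proof (cases "Y = ?Y")
        case True
        have "X - B E0 \<in> I" using X by (rule XsmallE)
        moreover have "X \<inter> Y \<subseteq> X - B E0" using True by blast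
        ultimately show ?thesis using I_sub by blast
      next
        case False
        then have "Y \<in> M" using XY by auto
        then show ?thesis using Mpw X XY(3) by blast
      qed
    qed
  qed
  then have "insert ?Y M = M" using Mmax by blast
  then show False using YnM by blast
qed


lemma theta_ex: "\<exists>\<theta>::'l. \<not> |{..<\<theta>}| \<le>o |{..<\<kappa>}|"
proof -
  have "|Pow {..<\<kappa>}| \<le>o |UNIV :: 'l set|" using lam_big by (rule ordLess_imp_ordLeq)
  then obtain j :: "'l set \<Rightarrow> 'l" where j: "inj_on j (Pow {..<\<kappa>})"
    using card_of_ordLeq[of "Pow {..<\<kappa>}" "UNIV :: 'l set"] by blast
  have "|j ` Pow {..<\<kappa>}| \<le>o |Pow {..<\<kappa>}|" by (rule card_of_image)
  then have "|j ` Pow {..<\<kappa>}| <o |UNIV :: 'l set|" using lam_big by (rule ordLeq_ordLess_trans)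
  then obtain \<alpha> where a: "\<forall>x\<in>j ` Pow {..<\<kappa>}. x < \<alpha>" using bounded by blast
  have "j ` Pow {..<\<kappa>} \<subseteq> {..<\<alpha>}" using a by auto
  then have Pa: "|Pow {..<\<kappa>}| \<le>o |{..<\<alpha>}|" using j card_of_ordLeq by blast
  show ?thesis
  proof (intro exI notI)
    assume "|{..<\<alpha>}| \<le>o |{..<\<kappa>}|"
    then have "|Pow {..<\<kappa>}| \<le>o |{..<\<kappa>}|" using Pa by (rule ordLeq_transitive[rotated])
    then have "|Pow {..<\<kappa>}| <o |Pow {..<\<kappa>}|" using card_of_Pow by (rule ordLeq_ordLess_trans)
    then show False by (simp add: ordLess_irreflexive)
  qed
qed

definition theta :: 'l where "theta = (LEAST \<theta>. (card_of {..<\<theta>}, card_of {..<\<kappa>}) \<notin> ordLeq)"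

lemma theta_big: "\<not> |{..<theta}| \<le>o |{..<\<kappa>}|"
  unfolding theta_def using theta_ex by (rule LeastI_ex)

lemma theta_min: "\<alpha> < theta \<Longrightarrow> |{..<\<alpha>}| \<le>o |{..<\<kappa>}|"
  unfolding theta_def using not_less_Least by blast

lemma theta_ne: "\<exists>\<zeta>. \<zeta> < theta"
proof (rule ccontr)
  assume "\<not> ?thesis"
  then have e: "{..<theta} = {}" by auto
  have "|{..<theta}| \<le>o |{..<\<kappa>}|" unfolding e by (rule card_of_empty)
  then show False using theta_big by simp
qed

lemma theta_bound:
  assumes X: "X \<subseteq> {..<theta}" and c: "|X| \<le>o |{..<\<kappa>}|"
  shows "\<exists>y<theta. \<forall>x\<in>X. x < y"
proof (rule ccontr)
  assume nb: "\<not> ?thesis"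
  have "{..<theta} \<subseteq> (\<Union>x\<in>X. {..x})"
  proof
    fix y assume y: "y \<in> {..<theta}"
    then obtain x where "x \<in> X" "\<not> x < y" using nb by auto
    then show "y \<in> (\<Union>x\<in>X. {..x})" by (auto simp: not_less)
  qed
  then have "|{..<theta}| \<le>o |\<Union>x\<in>X. {..x}|" by (rule card_of_mono1)
  moreover have "|\<Union>x\<in>X. {..x}| \<le>o |{..<\<kappa>}|"
  proof (rule card_of_UNION_ordLeq_infinite[OF kap_inf c], rule ballI)
    fix x assume "x \<in> X"
    then have xt: "x < theta" using X by auto
    have "{..x} = {..<x} \<union> {x}" by auto
    moreover have "|{..<x} \<union> {x}| \<le>o |{..<\<kappa>}|"
    proof (rule card_of_Un_ordLeq_infinite_Field)
      show "\<not> finite (Field |{..<\<kappa>}| )" using kap_inf by (simp add: Field_card_of)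
      show "|{..<x}| \<le>o |{..<\<kappa>}|" using theta_min[OF xt] .
      have "{..<\<kappa>} \<noteq> {}" using kap_inf by auto
      then show "|{x}| \<le>o |{..<\<kappa>}|" by (rule card_of_singl_ordLeq)
      show "Card_order |{..<\<kappa>}|" by (rule card_of_Card_order)
    qed
    ultimately show "|{..x}| \<le>o |{..<\<kappa>}|" by simp
  qed
  ultimately have "|{..<theta}| \<le>o |{..<\<kappa>}|" by (rule ordLeq_transitive)
  then show False using theta_big by simp
qed

definition bad :: "'l set \<Rightarrow> 'l set \<Rightarrow> 'l set \<Rightarrow> 'l set" where
  "bad S D F = {\<delta>\<in>S. unbounded_below \<delta> (Cset F \<delta> - D)}"

lemma bad_diag:
  fixes Ee :: "'l \<Rightarrow> 'l set"
  assumes Scof: "S \<subseteq> {\<delta>. cof_eq \<delta> \<kappa>}" and cl: "\<forall>i. club (Ee i)"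
  shows "\<exists>E0. club E0 \<and> (\<forall>i. bad S (Ee i) F - bad S E0 F \<in> I)"
proof -
  let ?E0 = "{\<beta>. \<forall>i<\<beta>. \<beta> \<in> Ee i}"
  have "club ?E0" by (rule Diag_club) (use cl in blast)
  moreover have "bad S (Ee i) F - bad S ?E0 F \<in> I" for i
  proof -
    have "bad S (Ee i) F - bad S ?E0 F \<subseteq> {..i}"
    proof
      fix \<delta> assume d: "\<delta> \<in> bad S (Ee i) F - bad S ?E0 F"
      show "\<delta> \<in> {..i}"
      proof (rule ccontr)
        assume "\<delta> \<notin> {..i}"
        then have id: "i < \<delta>" by (simp add: not_le)
        have dS: "\<delta> \<in> S" and ub: "unbounded_below \<delta> (Cset F \<delta> - Ee i)" using d unfolding bad_def by auto
        have cof: "cof_eq \<delta> \<kappa>" using dS Scof by auto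
        have "unbounded_below \<delta> (Cset F \<delta> - ?E0)" unfolding unbounded_below_def
        proof (intro conjI allI impI)
          show "Cset F \<delta> - ?E0 \<subseteq> {..<\<delta>}" using Cset_sub[OF cof] by blast
          fix \<alpha> assume "\<alpha> < \<delta>"
          then have "max \<alpha> i < \<delta>" using id by simp
          then obtain \<beta> where b: "\<beta> \<in> Cset F \<delta> - Ee i" "max \<alpha> i < \<beta>" using ub unfolding unbounded_below_def by blast
          then have "\<beta> \<notin> ?E0" by auto
          then show "\<exists>\<beta>\<in>Cset F \<delta> - ?E0. \<alpha> < \<beta>" using b by auto
        qed
        then have "\<delta> \<in> bad S ?E0 F" using dS unfolding bad_def by blast
        then show False using d by blast
      qed
    qed
    then show ?thesis using I_le I_sub by blast
  qed
  ultimately show ?thesis by blast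
qed

definition Phi :: "'l set \<Rightarrow> 'l set \<Rightarrow> 'l set" where
  "Phi S F = (SOME E. club E \<and> (\<forall>D. club D \<longrightarrow> bad S D F - bad S E F \<in> I))"

lemma Phi_ok:
  assumes Scof: "S \<subseteq> {\<delta>. cof_eq \<delta> \<kappa>}"
  shows "club (Phi S F) \<and> (\<forall>D. club D \<longrightarrow> bad S D F - bad S (Phi S F) F \<in> I)"
proof -
  have "\<exists>E. club E \<and> (\<forall>D. club D \<longrightarrow> bad S D F - bad S E F \<in> I)"
    by (rule max_bad) (rule bad_diag[OF Scof])
  then show ?thesis unfolding Phi_def by (rule someI_ex)
qed

end

context setting begin

lemma main:
  assumes Scof: "S \<subseteq> {\<delta>. cof_eq \<delta> \<kappa>}"
  shows "\<exists>Cs :: 'l \<Rightarrow> 'l set.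
           (\<forall>\<delta>\<in>S. club_below \<delta> (Cs \<delta>) \<and>
                  (\<exists>f. bij_betw f {..<\<kappa>} (Cs \<delta>) \<and> strict_mono_on {..<\<kappa>} f)) \<and>
           (\<forall>C. club C \<longrightarrow> {\<delta>\<in>S. unbounded_below \<delta> (Cs \<delta> - C)} \<in> I)"
proof -
  define EE :: "'l \<Rightarrow> 'l set" where "EE = wrec (\<lambda>P \<zeta>. Phi S (\<Inter>P))"
  define FF where "FF \<zeta> = \<Inter> (EE ` {..<\<zeta>})" for \<zeta>
  have EE_eq: "EE \<zeta> = Phi S (FF \<zeta>)" for \<zeta>
    unfolding FF_def EE_def by (subst wrec_eq) simp
  have EE_club: "club (EE \<zeta>)" for \<zeta> using Phi_ok[OF Scof] EE_eq by simp
  have FF_club: "club (FF \<zeta>)" for \<zeta> unfolding FF_def by (rule Inter_club) (rule EE_club)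
  have FF_anti: "FF \<zeta>' \<subseteq> FF \<zeta>" if "\<zeta> \<le> \<zeta>'" for \<zeta> \<zeta>'
    unfolding FF_def using that by (auto dest: less_le_trans)
  have FF_EE: "FF \<zeta>' \<subseteq> EE \<zeta>" if "\<zeta> < \<zeta>'" for \<zeta> \<zeta>'
    unfolding FF_def using that by auto
  define Es where "Es = FF theta"
  have Es_club: "club Es" unfolding Es_def by (rule FF_club)
  have FF_Es: "Es \<subseteq> FF \<zeta>" if "\<zeta> < theta" for \<zeta>
    unfolding Es_def using FF_anti that by (simp add: less_imp_le)
  have stab: "\<exists>y<theta. \<exists>y'. y < y' \<and> y' < theta \<and> Cset (FF y') \<delta> = Cset (FF y) \<delta>" for \<delta>
  proof -
    define vals where "vals i = (\<lambda>\<zeta>. tF (FF \<zeta>) \<delta> i) ` {..<theta}" for i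
    define m where "m i = (LEAST v. v \<in> vals i)" for i
    obtain t0 where t0: "t0 < theta" using theta_ne by blast
    have m_in: "m i \<in> vals i" for i
    proof -
      have "tF (FF t0) \<delta> i \<in> vals i" unfolding vals_def using t0 by blast
      then show ?thesis unfolding m_def by (rule LeastI)
    qed
    define zi where "zi i = (SOME \<zeta>. \<zeta> < theta \<and> tF (FF \<zeta>) \<delta> i = m i)" for i
    have zi: "zi i < theta \<and> tF (FF (zi i)) \<delta> i = m i" for i
    proof -
      have "\<exists>\<zeta>. \<zeta> < theta \<and> tF (FF \<zeta>) \<delta> i = m i" using m_in[of i] unfolding vals_def by auto
      then show ?thesis unfolding zi_def by (rule someI_ex)
    qed
    have const: "tF (FF \<zeta>) \<delta> i = m i" if "zi i \<le> \<zeta>" "\<zeta> < theta" for i \<zeta>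
    proof (rule antisym)
      have "tF (FF \<zeta>) \<delta> i \<le> tF (FF (zi i)) \<delta> i" by (rule tF_anti[OF FF_anti[OF that(1)]])
      then show "tF (FF \<zeta>) \<delta> i \<le> m i" using zi by simp
      have "tF (FF \<zeta>) \<delta> i \<in> vals i" unfolding vals_def using that(2) by blast
      then show "m i \<le> tF (FF \<zeta>) \<delta> i" unfolding m_def by (rule Least_le)
    qed
    have "zi ` {..<\<kappa>} \<subseteq> {..<theta}" using zi by auto
    moreover have "|zi ` {..<\<kappa>}| \<le>o |{..<\<kappa>}|" by (rule card_of_image)
    ultimately obtain y where y: "y < theta" "\<forall>x\<in>zi ` {..<\<kappa>}. x < y" using theta_bound by blast
    have "{y} \<subseteq> {..<theta}" using y by auto
    moreover have "|{y}| \<le>o |{..<\<kappa>}|" by (rule card_of_singl_ordLeq) (use kap_inf in auto)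
    ultimately obtain y' where y': "y' < theta" "\<forall>x\<in>{y}. x < y'" using theta_bound by blast
    have "Cset (FF y') \<delta> = Cset (FF y) \<delta>" unfolding Cset_def
    proof (rule image_cong[OF refl])
      fix i assume i: "i \<in> {..<\<kappa>}"
      have ziy: "zi i \<le> y" using y(2) i by (auto intro: less_imp_le)
      have "y \<le> y'" using y' by (auto intro: less_imp_le)
      then have "zi i \<le> y'" using ziy by simp
      then show "tF (FF y') \<delta> i = tF (FF y) \<delta> i" using const[OF _ y'(1)] const[OF ziy y(1)] by simp
    qed
    then show ?thesis using y y' by auto
  qed
  define zz where "zz \<delta> = (SOME y. y < theta \<and> (\<exists>y'. y < y' \<and> y' < theta \<and> Cset (FF y') \<delta> = Cset (FF y) \<delta>))" for \<delta>
  have zz: "zz \<delta> < theta \<and> (\<exists>y'. zz \<delta> < y' \<and> y' < theta \<and> Cset (FF y') \<delta> = Cset (FF (zz \<delta>)) \<delta>)" for \<delta>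
    unfolding zz_def using stab[of \<delta>] by (rule someI_ex[where P = "\<lambda>y. y < theta \<and> (\<exists>y'. y < y' \<and> y' < theta \<and> Cset (FF y') \<delta> = Cset (FF y) \<delta>)", OF exE]) blast+
  define Cs where "Cs \<delta> = (if accum_pt \<delta> Es then Cset (FF (zz \<delta>)) \<delta> else sq \<delta> ` {..<\<kappa>})" for \<delta>
  have key: "\<delta> \<notin> bad S (EE (zz \<delta>)) (FF (zz \<delta>))" if acc: "accum_pt \<delta> Es" for \<delta>
  proof
    assume db: "\<delta> \<in> bad S (EE (zz \<delta>)) (FF (zz \<delta>))"
    let ?y = "zz \<delta>"
    obtain y' where y': "?y < y'" "y' < theta" "Cset (FF y') \<delta> = Cset (FF ?y) \<delta>" using zz by blast
    have sub: "Cset (FF ?y) \<delta> - EE ?y \<subseteq> {lub {}}"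
    proof
      fix x assume x: "x \<in> Cset (FF ?y) \<delta> - EE ?y"
      then obtain i where i: "x = tF (FF y') \<delta> i" using y'(3) unfolding Cset_def by auto
      have "x \<in> FF y' \<or> x = lub {}" using tF_in[OF FF_club] i by simp
      moreover have "FF y' \<subseteq> EE ?y" using FF_EE y'(1) by blast
      ultimately show "x \<in> {lub {}}" using x by auto
    qed
    obtain \<beta> where b: "\<beta> \<in> Es" "\<beta> < \<delta>" using acc unfolding accum_pt_def by blast
    have z: "lub {} < \<delta>" using le_less_trans[OF lub_empty_le b(2)] .
    have "unbounded_below \<delta> (Cset (FF ?y) \<delta> - EE ?y)" using db unfolding bad_def by blast
    then obtain b where "b \<in> Cset (FF ?y) \<delta> - EE ?y" "lub {} < b" using z unfolding unbounded_below_def by blast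
    then show False using sub by auto
  qed
  show ?thesis
  proof (intro exI[of _ Cs] conjI)
    show "\<forall>\<delta>\<in>S. club_below \<delta> (Cs \<delta>) \<and> (\<exists>f. bij_betw f {..<\<kappa>} (Cs \<delta>) \<and> strict_mono_on {..<\<kappa>} f)"
    proof
    fix \<delta> assume dS: "\<delta> \<in> S"
    then have cof: "cof_eq \<delta> \<kappa>" using Scof by auto
    show "club_below \<delta> (Cs \<delta>) \<and> (\<exists>f. bij_betw f {..<\<kappa>} (Cs \<delta>) \<and> strict_mono_on {..<\<kappa>} f)"
    proof (cases "accum_pt \<delta> Es")
      case True
      then have "accum_pt \<delta> (FF (zz \<delta>))" using accum_mono[OF FF_Es] zz by blast
      then show ?thesis using tF_club[OF cof] True unfolding Cs_def by simp
    next
      case False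
      then show ?thesis using sq_club[OF cof] unfolding Cs_def by simp
    qed
    qed
  next
    show "\<forall>C. club C \<longrightarrow> {\<delta>\<in>S. unbounded_below \<delta> (Cs \<delta> - C)} \<in> I"
    proof (intro allI impI)
    fix C :: "'l set" assume C: "club C"
    let ?U = "\<Union>\<zeta>\<in>{..<theta}. bad S C (FF \<zeta>) - bad S (EE \<zeta>) (FF \<zeta>)"
    have "{\<delta>\<in>S. unbounded_below \<delta> (Cs \<delta> - C)} \<subseteq> {\<beta>. \<not> accum_pt \<beta> Es} \<union> ?U"
    proof
      fix \<delta> assume d: "\<delta> \<in> {\<delta>\<in>S. unbounded_below \<delta> (Cs \<delta> - C)}"
      show "\<delta> \<in> {\<beta>. \<not> accum_pt \<beta> Es} \<union> ?U"
      proof (cases "accum_pt \<delta> Es")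
        case True
        then have "\<delta> \<in> bad S C (FF (zz \<delta>))" using d unfolding bad_def Cs_def by simp
        moreover have "\<delta> \<notin> bad S (EE (zz \<delta>)) (FF (zz \<delta>))" using key[OF True] .
        moreover have "zz \<delta> < theta" using zz by blast
        ultimately show ?thesis by blast
      next
        case False then show ?thesis by blast
      qed
    qed
    moreover have "{\<beta>. \<not> accum_pt \<beta> Es} \<union> ?U \<in> I"
    proof (rule I_un)
      show "{\<beta>. \<not> accum_pt \<beta> Es} \<in> I" using Es_club by (rule NS_in_I)
      show "?U \<in> I"
      proof (rule I_union_lt)
        fix \<zeta> :: 'l
        show "bad S C (FF \<zeta>) - bad S (EE \<zeta>) (FF \<zeta>) \<in> I" using Phi_ok[OF Scof, of "FF \<zeta>"] C EE_eq by simp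
      qed
    qed
    ultimately show "{\<delta>\<in>S. unbounded_below \<delta> (Cs \<delta> - C)} \<in> I" using I_sub by blast
    qed
  qed
qed

end

theorem fact3p5:
  fixes \<kappa> :: "'l::wellorder" and S :: "'l set" and I :: "'l set set"
  assumes lam_reg: "regular_cardinal_type TYPE('l)"
    and kap_reg: "regular_cardinal_below \<kappa>"
    and kap_unc: "\<not> countable {..<\<kappa>}"
    and lam_big: "(card_of (Pow {..<\<kappa>}), card_of (UNIV :: 'l set)) \<in> ordLess"
    and S_cof: "S \<subseteq> {\<delta>. cof_eq \<delta> \<kappa>}"
    and S_stat: "stationary S"
    and I_normal: "normal_ideal I"
    and S_pos: "S \<notin> I"
    and I_sat: "saturated_succ I"
  shows "\<exists>Cs :: 'l \<Rightarrow> 'l set.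
           (\<forall>\<delta>\<in>S. club_below \<delta> (Cs \<delta>) \<and>
                  (\<exists>f. bij_betw f {..<\<kappa>} (Cs \<delta>) \<and> strict_mono_on {..<\<kappa>} f)) \<and>
           (\<forall>C. club C \<longrightarrow> {\<delta>\<in>S. unbounded_below \<delta> (Cs \<delta> - C)} \<in> I)"
proof -
  interpret setting \<kappa> I
    using lam_reg kap_reg kap_unc lam_big I_normal I_sat by (simp add: setting_def)
  show ?thesis using main[OF S_cof] .
qed

end
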